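(* Every instance of Leivant's principle $\Box(B\vee C)\to\Box(\Box B\vee C)$ is derivable in $\mathsf{iK4}$ extended by the schema $\mathsf{Le}^+$ (i.e. $\mathsf{iK4}\vdash\mathsf{Le}^+\to\mathsf{Le}$).
   Context: Modal language: propositional variables, $\bot$, $\wedge,\vee,\to$, $\Box$; atomic = variables and $\bot$; $\boxdot A:=A\wedge\Box A$. $\mathsf{iK4}$: intuitionistic propositional logic in the modal language plus $\Box(A\to B)\to(\Box A\to\Box B)$ and $\Box A\to\Box\Box A$, closed under modus ponens and necessitation. $\mathsf{NOI}$: propositions in which every $\to$ lies in the scope of a $\Box$. Leivant's translation: $A^l=A$ for atomic/boxed $A$; $(A\wedge B)^l=A^l\wedge B^l$; $(A\vee B)^l=\boxdot A^l\vee\boxdot B^l$; $(A\to B)^l=A\to B^l$ if $A\in\mathsf{NOI}$, else $A\to B$. $\mathsf{Le}^+$ is the schema $\Box A\to\Box A^l$; $\mathsf{Le}$ is the schema $\Box(B\vee C)\to\Box(\Box B\vee C)$. *)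

theory Defs
  imports Main
begin

datatype form =
    Var nat
  | Bot
  | And form form
  | Or form form
  | Imp form form
  | Box form

definition boxdot :: "form \<Rightarrow> form" where
  "boxdot A = And A (Box A)"

fun noi :: "form \<Rightarrow> bool" where
  "noi (Var p) = True"
| "noi Bot = True"
| "noi (And A B) = (noi A \<and> noi B)"
| "noi (Or A B) = (noi A \<and> noi B)"
| "noi (Imp A B) = False"
| "noi (Box A) = True"

fun lv :: "form \<Rightarrow> form" where
  "lv (Var p) = Var p"
| "lv Bot = Bot"
| "lv (Box A) = Box A"
| "lv (And A B) = And (lv A) (lv B)"
| "lv (Or A B) = Or (boxdot (lv A)) (boxdot (lv B))"
| "lv (Imp A B) = (if noi A then Imp A (lv B) else Imp A B)"

inductive iK4Leplus :: "form \<Rightarrow> bool" where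
  ax1: "iK4Leplus (Imp A (Imp B A))"
| ax2: "iK4Leplus (Imp (Imp A (Imp B C)) (Imp (Imp A B) (Imp A C)))"
| ax3: "iK4Leplus (Imp (And A B) A)"
| ax4: "iK4Leplus (Imp (And A B) B)"
| ax5: "iK4Leplus (Imp A (Imp B (And A B)))"
| ax6: "iK4Leplus (Imp A (Or A B))"
| ax7: "iK4Leplus (Imp B (Or A B))"
| ax8: "iK4Leplus (Imp (Imp A C) (Imp (Imp B C) (Imp (Or A B) C)))"
| ax9: "iK4Leplus (Imp Bot A)"
| axK: "iK4Leplus (Imp (Box (Imp A B)) (Imp (Box A) (Box B)))"
| ax4m: "iK4Leplus (Imp (Box A) (Box (Box A)))"
| axLeplus: "iK4Leplus (Imp (Box A) (Box (lv A)))"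
| mp: "iK4Leplus (Imp A B) \<Longrightarrow> iK4Leplus A \<Longrightarrow> iK4Leplus B"
| nec: "iK4Leplus A \<Longrightarrow> iK4Leplus (Box A)"

end

theory Submission
  imports Defs
begin

lemma imp_id: "iK4Leplus (Imp A A)"
proof -
  have "iK4Leplus (Imp (Imp A (Imp (Imp A A) A)) (Imp (Imp A (Imp A A)) (Imp A A)))" by (rule ax2)
  then have "iK4Leplus (Imp (Imp A (Imp A A)) (Imp A A))" using ax1 mp by blast
  then show ?thesis using ax1 mp by blast
qed

lemma imp_trans: "iK4Leplus (Imp A B) \<Longrightarrow> iK4Leplus (Imp B C) \<Longrightarrow> iK4Leplus (Imp A C)"
proof -
  assume h1: "iK4Leplus (Imp A B)" and h2: "iK4Leplus (Imp B C)"
  have "iK4Leplus (Imp A (Imp B C))" using h2 ax1 mp by blast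
  moreover have "iK4Leplus (Imp (Imp A (Imp B C)) (Imp (Imp A B) (Imp A C)))" by (rule ax2)
  ultimately have "iK4Leplus (Imp (Imp A B) (Imp A C))" using mp by blast
  then show ?thesis using h1 mp by blast
qed

lemma conj_intro: "iK4Leplus (Imp X Y) \<Longrightarrow> iK4Leplus (Imp X Z) \<Longrightarrow> iK4Leplus (Imp X (And Y Z))"
proof -
  assume h1: "iK4Leplus (Imp X Y)" and h2: "iK4Leplus (Imp X Z)"
  have "iK4Leplus (Imp X (Imp Z (And Y Z)))" using imp_trans[OF h1 ax5] .
  moreover have "iK4Leplus (Imp (Imp X (Imp Z (And Y Z))) (Imp (Imp X Z) (Imp X (And Y Z))))" by (rule ax2)
  ultimately show ?thesis using h2 mp by blast
qed

lemma and_mono: "iK4Leplus (Imp A C) \<Longrightarrow> iK4Leplus (Imp B D) \<Longrightarrow> iK4Leplus (Imp (And A B) (And C D))"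
  by (rule conj_intro; rule imp_trans, rule ax3 ax4, assumption)

lemma or_mono: "iK4Leplus (Imp A C) \<Longrightarrow> iK4Leplus (Imp B D) \<Longrightarrow> iK4Leplus (Imp (Or A B) (Or C D))"
proof -
  assume h1: "iK4Leplus (Imp A C)" and h2: "iK4Leplus (Imp B D)"
  have a: "iK4Leplus (Imp A (Or C D))" using imp_trans[OF h1 ax6] .
  have b: "iK4Leplus (Imp B (Or C D))" using imp_trans[OF h2 ax7] .
  have "iK4Leplus (Imp (Imp A (Or C D)) (Imp (Imp B (Or C D)) (Imp (Or A B) (Or C D))))" by (rule ax8)
  then show ?thesis using a b mp by blast
qed

lemma imp_mono: "iK4Leplus (Imp B D) \<Longrightarrow> iK4Leplus (Imp (Imp A B) (Imp A D))"
proof -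
  assume h: "iK4Leplus (Imp B D)"
  have "iK4Leplus (Imp A (Imp B D))" using h ax1 mp by blast
  moreover have "iK4Leplus (Imp (Imp A (Imp B D)) (Imp (Imp A B) (Imp A D)))" by (rule ax2)
  ultimately show ?thesis using mp by blast
qed

lemma box_mono: "iK4Leplus (Imp A B) \<Longrightarrow> iK4Leplus (Imp (Box A) (Box B))"
  using nec axK mp by blast

lemma lv_imp: "iK4Leplus (Imp (lv A) A)"
proof (induction A)
  case (Var x) then show ?case using imp_id by simp
next
  case Bot then show ?case using imp_id by simp
next
  case (And A1 A2) then show ?case by (simp add: and_mono)
next
  case (Or A1 A2)
  have "iK4Leplus (Imp (boxdot (lv A1)) A1)" unfolding boxdot_def using imp_trans[OF ax3 Or.IH(1)] .
  moreover have "iK4Leplus (Imp (boxdot (lv A2)) A2)" unfolding boxdot_def using imp_trans[OF ax3 Or.IH(2)] .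
  ultimately show ?case by (simp add: or_mono)
next
  case (Imp A1 A2) then show ?case by (simp add: imp_mono imp_id)
next
  case (Box A) then show ?case using imp_id by simp
qed

theorem lemma4p19:
  shows "iK4Leplus (Imp (Box (Or B C)) (Box (Or (Box B) C)))"
proof -
  have l: "iK4Leplus (Imp (Box (Or B C)) (Box (Or (boxdot (lv B)) (boxdot (lv C)))))"
    using axLeplus[of "Or B C"] by simp
  have b: "iK4Leplus (Imp (boxdot (lv B)) (Box B))"
    unfolding boxdot_def using imp_trans[OF ax4 box_mono[OF lv_imp]] .
  have c: "iK4Leplus (Imp (boxdot (lv C)) C)"
    unfolding boxdot_def using imp_trans[OF ax3 lv_imp] .
  show ?thesis using imp_trans[OF l box_mono[OF or_mono[OF b c]]] .
qed

end
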